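(* Let $k$ be a nonnegative integer and let $G$ be a finite simple graph such that every topological minor of $G$ has a vertex of degree at most $k$. Then $G$ is dynamically $(k+3)$-colorable.
   Context: All graphs are finite and simple. A graph $H$ is a topological minor of $G$ if $G$ has a subgraph isomorphic to a subdivision of $H$ (in particular $G$ is a topological minor of itself). Given a proper vertex coloring of a graph, a vertex $v$ is happy if either $v$ has at most one neighbor or $v$ has two neighbors receiving distinct colors. A dynamic $m$-coloring is a proper vertex coloring with at most $m$ colors in which every vertex is happy; a graph is dynamically $m$-colorable if it has one. *)

theory Defs
  imports Main
begin

definition simple_graph :: "'a set \<Rightarrow> 'a set set \<Rightarrow> bool" where
  "simple_graph V E \<longleftrightarrow> finite V \<and>
     (\<forall>e\<in>E. \<exists>u v. u \<noteq> v \<and> u \<in> V \<and> v \<in> V \<and> e = {u, v})"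

definition neighbors :: "'a set set \<Rightarrow> 'a \<Rightarrow> 'a set" where
  "neighbors E v = {u. {u, v} \<in> E}"

definition degree :: "'a set set \<Rightarrow> 'a \<Rightarrow> nat" where
  "degree E v = card (neighbors E v)"

definition is_path :: "'a set set \<Rightarrow> 'a list \<Rightarrow> bool" where
  "is_path E xs \<longleftrightarrow> distinct xs \<and> length xs \<ge> 2 \<and>
     (\<forall>i. Suc i < length xs \<longrightarrow> {xs ! i, xs ! Suc i} \<in> E)"

definition interior :: "'a list \<Rightarrow> 'a set" where
  "interior xs = set (butlast (tl xs))"

text \<open>(VH, EH) is a topological minor of (V, E): (VH, EH) is a simple graph and
  G contains a subgraph isomorphic to a subdivision of it, i.e. there is an injective
  map f of branch vertices and, for every edge {x,y} of H, a path P e in G from f x to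
  f y, such that the interiors of these paths avoid the branch vertices and are
  pairwise disjoint.\<close>
definition topological_minor :: "'b set \<Rightarrow> 'b set set \<Rightarrow> 'a set \<Rightarrow> 'a set set \<Rightarrow> bool" where
  "topological_minor VH EH V E \<longleftrightarrow> simple_graph VH EH \<and>
     (\<exists>f P. inj_on f VH \<and> f ` VH \<subseteq> V \<and>
        (\<forall>e\<in>EH. is_path E (P e) \<and> {hd (P e), last (P e)} = f ` e
                 \<and> interior (P e) \<inter> f ` VH = {}) \<and>
        (\<forall>e1\<in>EH. \<forall>e2\<in>EH. e1 \<noteq> e2 \<longrightarrow> interior (P e1) \<inter> interior (P e2) = {}))"

definition proper_coloring :: "'a set set \<Rightarrow> ('a \<Rightarrow> nat) \<Rightarrow> bool" where
  "proper_coloring E c \<longleftrightarrow> (\<forall>u v. {u, v} \<in> E \<longrightarrow> c u \<noteq> c v)"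

definition happy :: "'a set set \<Rightarrow> ('a \<Rightarrow> nat) \<Rightarrow> 'a \<Rightarrow> bool" where
  "happy E c v \<longleftrightarrow> card (neighbors E v) \<le> 1 \<or>
     (\<exists>u w. u \<in> neighbors E v \<and> w \<in> neighbors E v \<and> c u \<noteq> c w)"

definition dynamic_coloring :: "'a set \<Rightarrow> 'a set set \<Rightarrow> nat \<Rightarrow> ('a \<Rightarrow> nat) \<Rightarrow> bool" where
  "dynamic_coloring V E m c \<longleftrightarrow> proper_coloring E c \<and> c ` V \<subseteq> {..<m} \<and>
     (\<forall>v\<in>V. happy E c v)"

definition dynamically_colorable :: "'a set \<Rightarrow> 'a set set \<Rightarrow> nat \<Rightarrow> bool" where
  "dynamically_colorable V E m \<longleftrightarrow> (\<exists>c. dynamic_coloring V E m c)"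

end

theory Submission imports Defs begin

lemma succ_nth: "(\<forall>i. Suc i < length xs \<longrightarrow> P (xs!i) (xs!Suc i)) = successively P xs"
proof (induction P xs rule: successively.induct)
  case (3 P x y xs)
  show ?case
  proof
    assume H: "\<forall>i. Suc i < length (x # y # xs) \<longrightarrow> P ((x # y # xs) ! i) ((x # y # xs) ! Suc i)"
    have "P x y" using H[rule_format, of 0] by simp
    moreover have "\<forall>i. Suc i < length (y # xs) \<longrightarrow> P ((y # xs) ! i) ((y # xs) ! Suc i)"
      using H by (metis Suc_less_eq length_Cons nth_Cons_Suc)
    ultimately show "successively P (x # y # xs)" using 3 by simp
  next
    assume "successively P (x # y # xs)"
    hence "P x y" and "\<forall>i. Suc i < length (y # xs) \<longrightarrow> P ((y # xs) ! i) ((y # xs) ! Suc i)" using 3 by auto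
    thus "\<forall>i. Suc i < length (x # y # xs) \<longrightarrow> P ((x # y # xs) ! i) ((x # y # xs) ! Suc i)"
      by (metis Suc_less_eq length_Cons less_Suc_eq_0_disj nth_Cons_0 nth_Cons_Suc)
  qed
qed auto

lemma is_path_alt: "is_path E xs \<longleftrightarrow> distinct xs \<and> length xs \<ge> 2 \<and> successively (\<lambda>x y. {x,y} \<in> E) xs"
  unfolding is_path_def succ_nth[symmetric] by simp

lemma decomp: "length p \<ge> 2 \<Longrightarrow> p = hd p # butlast (tl p) @ [last p]"
  using append_butlast_last_id[of "tl p"] by (cases p) auto

lemma path_set:
  assumes "is_path E p"
  shows "set p = {hd p, last p} \<union> interior p" "hd p \<notin> interior p" "last p \<notin> interior p" "hd p \<noteq> last p"
proof -
  have l: "length p \<ge> 2" and d: "distinct p" using assms by (auto simp: is_path_def)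
  have e: "p = hd p # butlast (tl p) @ [last p]" using decomp[OF l] .
  have D: "distinct (hd p # butlast (tl p) @ [last p])" using d unfolding e[symmetric] .
  have S: "set p = set (hd p # butlast (tl p) @ [last p])" by (rule arg_cong[where f=set, OF e])
  show "set p = {hd p, last p} \<union> interior p" using S unfolding interior_def by auto
  show "hd p \<notin> interior p" "last p \<notin> interior p" "hd p \<noteq> last p"
    using D unfolding interior_def by auto
qed

lemma path_rev: "is_path E p \<Longrightarrow> is_path E (rev p)"
  unfolding is_path_alt by (auto simp: insert_commute)

lemma interior_rev: "interior (rev p) = interior p"
  unfolding interior_def by (metis butlast_rev set_rev butlast_tl rev_swap)

definition orient :: "'a list \<Rightarrow> 'a \<Rightarrow> 'a list" where
  "orient p x = (if hd p = x then p else rev p)"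

lemma orient:
  assumes "is_path E p" "{hd p, last p} = {x, y}"
  shows "hd (orient p x) = x" "last (orient p x) = y" "is_path E (orient p x)"
    "interior (orient p x) = interior p" "set (orient p x) = set p"
proof -
  have ne: "p \<noteq> []" using assms(1) by (auto simp: is_path_def)
  have hl: "hd p \<noteq> last p" using path_set[OF assms(1)] by blast
  show "is_path E (orient p x)" using assms(1) path_rev[OF assms(1)] by (simp add: orient_def)
  show "interior (orient p x) = interior p" by (simp add: orient_def interior_rev)
  show "set (orient p x) = set p" by (simp add: orient_def)
  show "hd (orient p x) = x" "last (orient p x) = y"
    using assms(2) hl ne by (auto simp: orient_def hd_rev last_rev doubleton_eq_iff)
qed

lemma concat_path:
  assumes q1: "is_path E q1" and q2: "is_path E q2" and hl: "last q1 = hd q2"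
    and disj: "set q1 \<inter> set q2 = {hd q2}"
  shows "is_path E (q1 @ tl q2)" "hd (q1 @ tl q2) = hd q1" "last (q1 @ tl q2) = last q2"
    "interior (q1 @ tl q2) = interior q1 \<union> {hd q2} \<union> interior q2"
proof -
  have l1: "length q1 \<ge> 2" and l2: "length q2 \<ge> 2" using q1 q2 by (auto simp: is_path_def)
  obtain h T where q2e: "q2 = h # T" and Tne: "T \<noteq> []" using l2 by (cases q2; cases "tl q2") auto
  have d1: "distinct q1" and d2: "distinct q2" using q1 q2 by (auto simp: is_path_def)
  have s1: "successively (\<lambda>x y. {x,y} \<in> E) q1" and s2: "successively (\<lambda>x y. {x,y} \<in> E) q2"
    using q1 q2 by (auto simp: is_path_alt)
  have "distinct (q1 @ T)" using d1 d2 disj q2e by auto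
  moreover have "successively (\<lambda>x y. {x,y} \<in> E) (q1 @ T)"
    using s1 s2 q2e Tne hl by (auto simp: successively_append_iff successively_Cons)
  moreover have "length (q1 @ T) \<ge> 2" using l1 by simp
  ultimately show "is_path E (q1 @ tl q2)" using q2e by (simp add: is_path_alt)
  show "hd (q1 @ tl q2) = hd q1" using l1 by (cases q1) auto
  show "last (q1 @ tl q2) = last q2" using q2e Tne by simp
  have e1: "q1 = hd q1 # butlast (tl q1) @ [last q1]" using decomp[OF l1] .
  have st: "set (tl q1) = interior q1 \<union> {last q1}"
    unfolding interior_def by (subst e1) simp
  have "tl (q1 @ T) = tl q1 @ T" using l1 by (cases q1) auto
  hence "butlast (tl (q1 @ T)) = tl q1 @ butlast T" using Tne by (simp add: butlast_append)
  hence "interior (q1 @ tl q2) = set (tl q1) \<union> set (butlast T)"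
    unfolding interior_def using q2e by simp
  also have "set (butlast T) = interior q2" unfolding interior_def using q2e by simp
  finally show "interior (q1 @ tl q2) = interior q1 \<union> {hd q2} \<union> interior q2"
    using st hl by auto
qed


lemma sg_edge: "simple_graph W F \<Longrightarrow> {x,y} \<in> F \<Longrightarrow> x \<in> W \<and> y \<in> W \<and> x \<noteq> y"
  unfolding simple_graph_def by (auto simp: doubleton_eq_iff)

lemma tm_del:
  assumes tm: "topological_minor W F V E" and vW: "v \<in> W"
  shows "topological_minor (W - {v}) {e\<in>F. v \<notin> e} V E"
proof -
  obtain f P where sg: "simple_graph W F" and inj: "inj_on f W" and im: "f ` W \<subseteq> V"
    and pth: "\<forall>e\<in>F. is_path E (P e) \<and> {hd (P e), last (P e)} = f ` e \<and> interior (P e) \<inter> f ` W = {}"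
    and dj: "\<forall>e1\<in>F. \<forall>e2\<in>F. e1 \<noteq> e2 \<longrightarrow> interior (P e1) \<inter> interior (P e2) = {}"
  proof -
    have sg: "simple_graph W F" and ex: "\<exists>f P. inj_on f W \<and> f ` W \<subseteq> V \<and>
        (\<forall>e\<in>F. is_path E (P e) \<and> {hd (P e), last (P e)} = f ` e \<and> interior (P e) \<inter> f ` W = {}) \<and>
        (\<forall>e1\<in>F. \<forall>e2\<in>F. e1 \<noteq> e2 \<longrightarrow> interior (P e1) \<inter> interior (P e2) = {})"
      using tm unfolding topological_minor_def by simp_all
    from ex obtain f P where "inj_on f W" "f ` W \<subseteq> V"
      "\<forall>e\<in>F. is_path E (P e) \<and> {hd (P e), last (P e)} = f ` e \<and> interior (P e) \<inter> f ` W = {}"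
      "\<forall>e1\<in>F. \<forall>e2\<in>F. e1 \<noteq> e2 \<longrightarrow> interior (P e1) \<inter> interior (P e2) = {}"
      by (elim exE conjE)
    with sg that show thesis by blast
  qed
  have sg': "simple_graph (W - {v}) {e\<in>F. v \<notin> e}"
    using sg unfolding simple_graph_def by fastforce
  show ?thesis unfolding topological_minor_def
  proof (intro conjI sg' exI[of _ f] exI[of _ P])
    show "inj_on f (W - {v})" using inj by (auto intro: inj_on_subset)
    show "f ` (W - {v}) \<subseteq> V" using im by auto
    show "\<forall>e\<in>{e \<in> F. v \<notin> e}. is_path E (P e) \<and> {hd (P e), last (P e)} = f ` e \<and> interior (P e) \<inter> f ` (W - {v}) = {}"
    proof
      fix e assume "e \<in> {e \<in> F. v \<notin> e}"
      hence "e \<in> F" by simp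
      hence "is_path E (P e)" "{hd (P e), last (P e)} = f ` e" "interior (P e) \<inter> f ` W = {}" using pth by auto
      thus "is_path E (P e) \<and> {hd (P e), last (P e)} = f ` e \<and> interior (P e) \<inter> f ` (W - {v}) = {}" by blast
    qed
    show "\<forall>e1\<in>{e \<in> F. v \<notin> e}. \<forall>e2\<in>{e \<in> F. v \<notin> e}. e1 \<noteq> e2 \<longrightarrow> interior (P e1) \<inter> interior (P e2) = {}"
      using dj by auto
  qed
qed

lemma tm_surg:
  assumes tm: "topological_minor W F V E" and vW: "v \<in> W"
    and av: "{a,v} \<in> F" and bv: "{b,v} \<in> F" and ab: "a \<noteq> b" and nab: "{a,b} \<notin> F"
  shows "topological_minor (W - {v}) ({e\<in>F. v \<notin> e} \<union> {{a,b}}) V E"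
proof -
  obtain f P where sg: "simple_graph W F" and inj: "inj_on f W" and im: "f ` W \<subseteq> V"
    and pth: "\<forall>e\<in>F. is_path E (P e) \<and> {hd (P e), last (P e)} = f ` e \<and> interior (P e) \<inter> f ` W = {}"
    and dj: "\<forall>e1\<in>F. \<forall>e2\<in>F. e1 \<noteq> e2 \<longrightarrow> interior (P e1) \<inter> interior (P e2) = {}"
  proof -
    have sg: "simple_graph W F" and ex: "\<exists>f P. inj_on f W \<and> f ` W \<subseteq> V \<and>
        (\<forall>e\<in>F. is_path E (P e) \<and> {hd (P e), last (P e)} = f ` e \<and> interior (P e) \<inter> f ` W = {}) \<and>
        (\<forall>e1\<in>F. \<forall>e2\<in>F. e1 \<noteq> e2 \<longrightarrow> interior (P e1) \<inter> interior (P e2) = {})"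
      using tm unfolding topological_minor_def by simp_all
    from ex obtain f P where "inj_on f W" "f ` W \<subseteq> V"
      "\<forall>e\<in>F. is_path E (P e) \<and> {hd (P e), last (P e)} = f ` e \<and> interior (P e) \<inter> f ` W = {}"
      "\<forall>e1\<in>F. \<forall>e2\<in>F. e1 \<noteq> e2 \<longrightarrow> interior (P e1) \<inter> interior (P e2) = {}"
      by (elim exE conjE)
    with sg that show thesis by blast
  qed
  have aW: "a \<in> W" "a \<noteq> v" and bW: "b \<in> W" "b \<noteq> v" using sg_edge[OF sg av] sg_edge[OF sg bv] by auto
  have fa: "f a \<noteq> f v" "f a \<noteq> f b" "f b \<noteq> f v" using inj aW bW vW ab by (auto dest: inj_onD)
  define q1 where "q1 = orient (P {a,v}) (f a)"
  define q2 where "q2 = orient (P {b,v}) (f v)"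
  have p1: "is_path E (P {a,v})" "{hd (P {a,v}), last (P {a,v})} = {f a, f v}"
    "interior (P {a,v}) \<inter> f ` W = {}" using pth av by auto
  have p2: "is_path E (P {b,v})" "{hd (P {b,v}), last (P {b,v})} = {f v, f b}"
    "interior (P {b,v}) \<inter> f ` W = {}" using pth bv by auto
  note o1 = orient[OF p1(1,2), folded q1_def]
  note o2 = orient[OF p2(1,2), folded q2_def]
  have I12: "interior q1 \<inter> interior q2 = {}" using dj av bv ab o1(4) o2(4)
    by (metis doubleton_eq_iff)
  have s1: "set q1 = {f a, f v} \<union> interior q1" using path_set(1)[OF o1(3)] o1(1,2) by simp
  have s2: "set q2 = {f v, f b} \<union> interior q2" using path_set(1)[OF o2(3)] o2(1,2) by simp
  have i1: "interior q1 \<inter> f ` W = {}" using p1(3) o1(4) by simp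
  have i2: "interior q2 \<inter> f ` W = {}" using p2(3) o2(4) by simp
  have "set q1 \<inter> set q2 = {hd q2}"
    using s1 s2 i1 i2 I12 fa o2(1) aW bW vW by auto
  note c = concat_path[OF o1(3) o2(3) _ this, unfolded o1(1,2) o2(1,2)]
  define R where "R = q1 @ tl q2"
  note c = c[folded R_def, simplified]
  define P' where "P' = (\<lambda>e. if e = {a,b} then R else P e)"
  have sg': "simple_graph (W - {v}) ({e\<in>F. v \<notin> e} \<union> {{a,b}})"
    using sg aW bW ab unfolding simple_graph_def by fastforce
  have iR: "interior R = interior (P {a,v}) \<union> {f v} \<union> interior (P {b,v})"
    using c o1(4) o2(4) by simp
  have fv: "f v \<notin> f ` (W - {v})" using inj vW by (auto dest: inj_onD)
  show ?thesis unfolding topological_minor_def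
  proof (intro conjI sg' exI[of _ f] exI[of _ P'])
    show "inj_on f (W - {v})" using inj by (auto intro: inj_on_subset)
    show "f ` (W - {v}) \<subseteq> V" using im by auto
  next
    show "\<forall>e\<in>{e\<in>F. v \<notin> e} \<union> {{a,b}}. is_path E (P' e) \<and> {hd (P' e), last (P' e)} = f ` e \<and> interior (P' e) \<inter> f ` (W - {v}) = {}"
    proof
    fix e assume e: "e \<in> {e\<in>F. v \<notin> e} \<union> {{a,b}}"
    show "is_path E (P' e) \<and> {hd (P' e), last (P' e)} = f ` e \<and> interior (P' e) \<inter> f ` (W - {v}) = {}"
    proof (cases "e = {a,b}")
      case True
      then show ?thesis unfolding P'_def using c iR p1(3) p2(3) fv i1 i2 by auto
    next
      case False
      then show ?thesis unfolding P'_def using e pth by auto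
    qed
    qed
  next
    show "\<forall>e1\<in>{e\<in>F. v \<notin> e} \<union> {{a,b}}. \<forall>e2\<in>{e\<in>F. v \<notin> e} \<union> {{a,b}}. e1 \<noteq> e2 \<longrightarrow> interior (P' e1) \<inter> interior (P' e2) = {}"
    proof (intro ballI impI)
    fix e1 e2 assume e1: "e1 \<in> {e\<in>F. v \<notin> e} \<union> {{a,b}}" and e2: "e2 \<in> {e\<in>F. v \<notin> e} \<union> {{a,b}}"
      and ne: "e1 \<noteq> e2"
    have gen: "interior R \<inter> interior (P e) = {}" if "e \<in> F" "v \<notin> e" for e
    proof -
      have "e \<noteq> {a,v}" "e \<noteq> {b,v}" using that by auto
      hence "interior (P {a,v}) \<inter> interior (P e) = {}" "interior (P {b,v}) \<inter> interior (P e) = {}"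
        using dj that av bv by auto
      moreover have "f v \<notin> interior (P e)" using pth that vW by auto
      ultimately show ?thesis using iR by auto
    qed
    show "interior (P' e1) \<inter> interior (P' e2) = {}"
    proof (cases "e1 = {a,b}")
      case True
      hence "e2 \<in> F" "v \<notin> e2" "e2 \<noteq> {a,b}" using e2 ne by auto
      thus ?thesis using True gen[of e2] unfolding P'_def by simp
    next
      case f1: False
      show ?thesis
      proof (cases "e2 = {a,b}")
        case True
        hence "e1 \<in> F" "v \<notin> e1" using e1 f1 by auto
        thus ?thesis using True f1 gen[of e1] unfolding P'_def by (simp add: Int_commute)
      next
        case False
        hence "e1 \<in> F" "e2 \<in> F" using e1 e2 f1 by auto
        thus ?thesis using False f1 ne dj unfolding P'_def by simp
      qed
    qed
    qed
  qed
qed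


lemma extend:
  assumes sg: "simple_graph W F" and vW: "v \<in> W"
    and N_def: "N = neighbors F v" and F0_def: "F0 = {e\<in>F. v \<notin> e}"
    and F'0: "F0 \<subseteq> F'" and F'N: "\<forall>e\<in>F'. e \<notin> F0 \<longrightarrow> (\<exists>x y. e = {x,y} \<and> x \<in> N \<and> y \<in> N)"
    and dc: "dynamic_coloring (W - {v}) F' m c'"
    and vh: "card N \<le> 1 \<or> (\<exists>x\<in>N. \<exists>y\<in>N. c' x \<noteq> c' y)"
    and col: "col < m" "col \<notin> c' ` N" "\<forall>u\<in>N. \<forall>x. c' ` neighbors F0 u = {x} \<longrightarrow> col \<noteq> x"
  shows "dynamic_coloring W F m (c'(v:=col))"
proof -
  let ?c = "c'(v:=col)"
  have pr: "proper_coloring F' c'" and rg: "c' ` (W - {v}) \<subseteq> {..<m}" and hp: "\<forall>w\<in>W - {v}. happy F' c' w"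
    using dc unfolding dynamic_coloring_def by auto
  have vN: "v \<notin> N" using sg_edge[OF sg, of v v] N_def unfolding neighbors_def by auto
  have nF0: "v \<notin> neighbors F0 u" for u using F0_def unfolding neighbors_def by auto
  have nb1: "neighbors F w = neighbors F0 w" if "w \<noteq> v" "w \<notin> N" for w
    using that N_def F0_def unfolding neighbors_def by (auto simp: insert_commute)
  have nb2: "neighbors F w = insert v (neighbors F0 w)" if "w \<in> N" for w
    using that vN N_def F0_def unfolding neighbors_def by (auto simp: insert_commute)
  have nb3: "neighbors F' w = neighbors F0 w" if "w \<notin> N" for w
    using that F'0 F'N unfolding neighbors_def by (auto simp: doubleton_eq_iff)
  have "proper_coloring F ?c"
    unfolding proper_coloring_def
  proof (intro allI impI)
    fix x y assume e: "{x,y} \<in> F"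
    have xy: "x \<noteq> y" using sg_edge[OF sg e] by simp
    show "?c x \<noteq> ?c y"
    proof (cases "x = v \<or> y = v")
      case True
      then show ?thesis using e xy col(2) N_def unfolding neighbors_def
        by (auto simp: insert_commute)
    next
      case False
      hence "{x,y} \<in> F'" using e F0_def F'0 by auto
      then show ?thesis using pr False unfolding proper_coloring_def by auto
    qed
  qed
  moreover have "?c ` W \<subseteq> {..<m}" using rg col(1) by auto
  moreover have "\<forall>w\<in>W. happy F ?c w"
  proof
    fix w assume wW: "w \<in> W"
    show "happy F ?c w"
    proof (cases "w = v")
      case True
      then show ?thesis using vh vN N_def unfolding happy_def by auto
    next
      case wv: False
      show ?thesis
      proof (cases "w \<in> N")
        case False
        have "happy F' c' w" using hp wW wv by auto
        moreover have "v \<notin> neighbors F w" using nb1[OF wv False] nF0 by simp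
        ultimately show ?thesis unfolding happy_def using nb1[OF wv False] nb3[OF False]
          by (metis fun_upd_other)
      next
        case True
        let ?S = "neighbors F0 w"
        show ?thesis
        proof (cases "?S = {}")
          case True
          then show ?thesis using nb2[OF \<open>w \<in> N\<close>] unfolding happy_def by simp
        next
          case Sne: False
          then obtain s where s: "s \<in> ?S" by auto
          have svv: "s \<noteq> v" using s nF0 by metis
          show ?thesis
          proof (cases "\<exists>x. c' ` ?S = {x}")
            case True
            then obtain x where x: "c' ` ?S = {x}" by auto
            have "c' s = x" using x s by auto
            hence "?c s \<noteq> ?c v" using col(3) True x \<open>w \<in> N\<close> svv by auto
            then show ?thesis unfolding happy_def using nb2[OF \<open>w \<in> N\<close>] s by blast
          next
            case False
            then obtain s2 where "s2 \<in> ?S" "c' s2 \<noteq> c' s" using s by blast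
            moreover have "s2 \<noteq> v" using \<open>s2 \<in> ?S\<close> nF0 by metis
            ultimately show ?thesis unfolding happy_def using nb2[OF \<open>w \<in> N\<close>] s svv
              by (metis fun_upd_other insertCI)
          qed
        qed
      qed
    qed
  qed
  ultimately show ?thesis unfolding dynamic_coloring_def by blast
qed


lemma two_elems: "finite N \<Longrightarrow> card N \<ge> 2 \<Longrightarrow> \<exists>x\<in>N. \<exists>y\<in>N. x \<noteq> y"
  using card_le_Suc0_iff_eq[of N] by auto

lemma main:
  fixes V W :: "'a set" and E F :: "'a set set" and k :: nat
  assumes hyp: "\<forall>(VH :: 'a set) EH. topological_minor VH EH V E \<and> VH \<noteq> {}
           \<longrightarrow> (\<exists>v\<in>VH. degree EH v \<le> k)"
  shows "topological_minor W F V E \<Longrightarrow> dynamically_colorable W F (k + 3)"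
proof (induction "card W" arbitrary: W F rule: less_induct)
  case less
  have sg: "simple_graph W F" using less.prems unfolding topological_minor_def by blast
  have fin: "finite W" using sg unfolding simple_graph_def by blast
  show ?case
  proof (cases "W = {}")
    case True
    have "F = {}" using sg True unfolding simple_graph_def by auto
    then show ?thesis using True
      unfolding dynamically_colorable_def dynamic_coloring_def proper_coloring_def by auto
  next
    case False
    obtain v where vW: "v \<in> W" and vmin: "\<forall>u\<in>W. degree F v \<le> degree F u"
    proof -
      let ?m = "Min (degree F ` W)"
      have "?m \<in> degree F ` W" using fin False by simp
      then obtain v where "v \<in> W" "degree F v = ?m" by auto
      moreover have "\<forall>u\<in>W. ?m \<le> degree F u" using fin by simp
      ultimately show ?thesis using that by auto
    qed
    obtain u0 where "u0 \<in> W" "degree F u0 \<le> k" using hyp[rule_format, of W F] less.prems False by blast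
    hence dk: "degree F v \<le> k" using vmin by fastforce
    define N where "N = neighbors F v"
    define F0 where "F0 = {e\<in>F. v \<notin> e}"
    have nbW: "neighbors F u \<subseteq> W" for u using sg_edge[OF sg] unfolding neighbors_def by auto
    have NW: "N \<subseteq> W - {v}" using sg_edge[OF sg] unfolding N_def neighbors_def by auto
    have finN: "finite N" using NW fin finite_subset by blast
    have cN: "card N = degree F v" unfolding N_def degree_def ..
    have finnb: "finite (neighbors F0 u)" for u
      using nbW[of u] fin unfolding F0_def neighbors_def by (auto intro: finite_subset)
    have lt: "card (W - {v}) < card W" using fin vW by (meson card_Diff1_less)
    define B where "B = (\<lambda>c'::'a\<Rightarrow>nat. {x. \<exists>u\<in>N. c' ` neighbors F0 u = {x}})"
    have Bsub: "B c' \<subseteq> (\<lambda>u. the_elem (c' ` neighbors F0 u)) ` N" for c'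
    proof
      fix x assume "x \<in> B c'"
      then obtain u where "u \<in> N" "c' ` neighbors F0 u = {x}" unfolding B_def by auto
      thus "x \<in> (\<lambda>u. the_elem (c' ` neighbors F0 u)) ` N" by (metis the_elem_eq image_eqI)
    qed
    have finB: "finite (B c')" for c' using finite_surj[OF finN Bsub] .
    have pick: "\<exists>col. col < k + 3 \<and> col \<notin> c' ` N \<and> (\<forall>u\<in>N. \<forall>x. c' ` neighbors F0 u = {x} \<longrightarrow> col \<noteq> x)"
      if "card (c' ` N \<union> B c') < k + 3" for c'
    proof (rule ccontr)
      assume "\<not> ?thesis"
      hence "{..<k+3} \<subseteq> c' ` N \<union> B c'" unfolding B_def by auto
      hence "card {..<k+3} \<le> card (c' ` N \<union> B c')"
        using finN finB by (intro card_mono) auto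
      thus False using that by simp
    qed
    show ?thesis
    proof (cases "\<forall>a\<in>N. \<forall>b\<in>N. a \<noteq> b \<longrightarrow> {a,b} \<in> F")
      case clique: True
      have tm: "topological_minor (W - {v}) F0 V E" using tm_del[OF less.prems vW] F0_def by simp
      obtain c' where dc: "dynamic_coloring (W - {v}) F0 (k+3) c'"
        using less.hyps[OF lt tm] unfolding dynamically_colorable_def by blast
      have pr: "proper_coloring F0 c'" using dc unfolding dynamic_coloring_def by blast
      have inF0: "{a,b} \<in> F0" if "a \<in> N" "b \<in> N" "a \<noteq> b" for a b
        using clique that NW unfolding F0_def by auto
      have vh: "card N \<le> 1 \<or> (\<exists>x\<in>N. \<exists>y\<in>N. c' x \<noteq> c' y)"
      proof (cases "card N \<ge> 2")
        case True
        then obtain x y where "x \<in> N" "y \<in> N" "x \<noteq> y" using two_elems finN by blast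
        then show ?thesis using inF0 pr unfolding proper_coloring_def by blast
      qed simp
      have "card (c' ` N \<union> B c') < k + 3"
      proof (cases "card N \<ge> 2")
        case True
        have "B c' \<subseteq> c' ` N"
        proof
          fix x assume "x \<in> B c'"
          then obtain u where u: "u \<in> N" "c' ` neighbors F0 u = {x}" unfolding B_def by auto
          obtain w where w: "w \<in> N" "w \<noteq> u" using two_elems[OF finN True] by blast
          have "w \<in> neighbors F0 u" using inF0[OF w(1) u(1) w(2)] unfolding neighbors_def by simp
          hence "c' w = x" using u(2) by auto
          thus "x \<in> c' ` N" using w by auto
        qed
        hence "card (c' ` N \<union> B c') \<le> card N" using finN
          by (simp add: Un_absorb2 card_image_le)
        then show ?thesis using cN dk by simp
      next
        case False
        have "card (c' ` N \<union> B c') \<le> card (c' ` N) + card (B c')" by (rule card_Un_le)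
        also have "\<dots> \<le> card N + card N"
          using card_image_le[OF finN] card_mono[OF _ Bsub] card_image_le[OF finN]
          by (meson add_le_mono finite_imageI finN le_trans)
        finally show ?thesis using False by simp
      qed
      then obtain col where col: "col < k + 3" "col \<notin> c' ` N"
        "\<forall>u\<in>N. \<forall>x. c' ` neighbors F0 u = {x} \<longrightarrow> col \<noteq> x" using pick by blast
      have "dynamic_coloring W F (k+3) (c'(v:=col))"
        by (rule extend[OF sg vW N_def F0_def _ _ dc vh col]) auto
      then show ?thesis unfolding dynamically_colorable_def by blast
    next
      case False
      then obtain a b where ab: "a \<in> N" "b \<in> N" "a \<noteq> b" "{a,b} \<notin> F" by blast
      define F' where "F' = F0 \<union> {{a,b}}"
      have tm: "topological_minor (W - {v}) F' V E"
        using tm_surg[OF less.prems vW _ _ ab(3,4)] ab(1,2) F0_def F'_def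
        unfolding N_def neighbors_def by simp
      obtain c' where dc: "dynamic_coloring (W - {v}) F' (k+3) c'"
        using less.hyps[OF lt tm] unfolding dynamically_colorable_def by blast
      have pr: "proper_coloring F' c'" and hp: "\<forall>w\<in>W - {v}. happy F' c' w"
        using dc unfolding dynamic_coloring_def by auto
      have vh: "card N \<le> 1 \<or> (\<exists>x\<in>N. \<exists>y\<in>N. c' x \<noteq> c' y)"
        using ab pr unfolding proper_coloring_def F'_def by blast
      have "B c' \<subseteq> (\<lambda>u. the_elem (c' ` neighbors F0 u)) ` {a,b}"
      proof
        fix x assume "x \<in> B c'"
        then obtain u where u: "u \<in> N" "c' ` neighbors F0 u = {x}" unfolding B_def by auto
        show "x \<in> (\<lambda>u. the_elem (c' ` neighbors F0 u)) ` {a,b}"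
        proof (cases "u \<in> {a,b}")
          case True then show ?thesis using u by force
        next
          case uab: False
          have "card {a,b,u} = 3" using uab ab by auto
          moreover have "{a,b,u} \<subseteq> N" using ab u by auto
          ultimately have "3 \<le> card N" using finN by (metis card_mono)
          hence "3 \<le> degree F u" using vmin cN u NW by fastforce
          moreover have "neighbors F u \<subseteq> insert v (neighbors F0 u)"
            using u NW unfolding neighbors_def F0_def by auto
          ultimately have "3 \<le> card (insert v (neighbors F0 u))" unfolding degree_def
            using finnb[of u] by (meson card_mono finite_insert le_trans)
          hence c2: "2 \<le> card (neighbors F0 u)" using finnb[of u]
            by (metis card_insert_le_m1 diff_Suc_1 le_trans not_less_eq_eq numeral_3_eq_3 numeral_2_eq_2 zero_less_Suc)
          have "neighbors F' u = neighbors F0 u"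
            using uab unfolding F'_def neighbors_def by (auto simp: doubleton_eq_iff)
          moreover have "happy F' c' u" using hp u NW by auto
          ultimately obtain y z where "y \<in> neighbors F0 u" "z \<in> neighbors F0 u" "c' y \<noteq> c' z"
            using c2 unfolding happy_def by auto
          then show ?thesis using u(2) by (metis imageI singletonD)
        qed
      qed
      hence "card (B c') \<le> card ((\<lambda>u. the_elem (c' ` neighbors F0 u)) ` {a,b})"
        by (intro card_mono) auto
      also have "\<dots> \<le> card {a,b}" by (rule card_image_le) simp
      also have "\<dots> = 2" using ab(3) by simp
      finally have "card (B c') \<le> 2" .
      hence "card (c' ` N \<union> B c') \<le> card N + 2"
        using card_Un_le[of "c' ` N" "B c'"] card_image_le[OF finN, of c'] by linarith
      hence "card (c' ` N \<union> B c') < k + 3" using cN dk by linarith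
      then obtain col where col: "col < k + 3" "col \<notin> c' ` N"
        "\<forall>u\<in>N. \<forall>x. c' ` neighbors F0 u = {x} \<longrightarrow> col \<noteq> x" using pick by blast
      have "dynamic_coloring W F (k+3) (c'(v:=col))"
        by (rule extend[OF sg vW N_def F0_def _ _ dc vh col]) (use ab in \<open>auto simp: F'_def\<close>)
      then show ?thesis unfolding dynamically_colorable_def by blast
    qed
  qed
qed


lemma tm_self:
  assumes sg: "simple_graph V E"
  shows "topological_minor V E V E"
proof -
  define P where "P = (\<lambda>e::'a set. SOME xs. distinct xs \<and> set xs = e \<and> length xs = 2)"
  have Pe: "\<exists>x y. P e = [x,y] \<and> x \<noteq> y \<and> {x,y} = e" if "e \<in> E" for e
  proof -
    have "\<forall>e\<in>E. \<exists>u v. u \<noteq> v \<and> u \<in> V \<and> v \<in> V \<and> e = {u, v}" using sg unfolding simple_graph_def by simp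
    hence "\<exists>u v. u \<noteq> v \<and> u \<in> V \<and> v \<in> V \<and> e = {u, v}" using that by (rule bspec)
    then obtain u w where uw: "u \<noteq> w" "e = {u,w}" by (elim exE conjE)
    have "\<exists>xs. distinct xs \<and> set xs = e \<and> length xs = 2" using uw by (intro exI[of _ "[u,w]"]) auto
    hence "distinct (P e) \<and> set (P e) = e \<and> length (P e) = 2" unfolding P_def by (rule someI_ex)
    then show ?thesis by (cases "P e" rule: list.exhaust; cases "tl (P e)" rule: list.exhaust) auto
  qed
  have int0: "interior (P e) = {}" if "e \<in> E" for e
    using Pe[OF that] unfolding interior_def by auto
  show ?thesis unfolding topological_minor_def
  proof (intro conjI sg exI[of _ id] exI[of _ P])
    show "inj_on id V" by simp
    show "id ` V \<subseteq> V" by simp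
    show "\<forall>e\<in>E. is_path E (P e) \<and> {hd (P e), last (P e)} = id ` e \<and> interior (P e) \<inter> id ` V = {}"
    proof
      fix e assume "e \<in> E"
      then obtain x y where "P e = [x,y]" "x \<noteq> y" "{x,y} = e" using Pe by blast
      then show "is_path E (P e) \<and> {hd (P e), last (P e)} = id ` e \<and> interior (P e) \<inter> id ` V = {}"
        using \<open>e \<in> E\<close> unfolding is_path_def interior_def
        by (auto simp: less_Suc_eq nth_Cons')
    qed
    show "\<forall>e1\<in>E. \<forall>e2\<in>E. e1 \<noteq> e2 \<longrightarrow> interior (P e1) \<inter> interior (P e2) = {}"
      using int0 by blast
  qed
qed

theorem lemma6p2:
  fixes V :: "'a set" and E :: "'a set set" and k :: nat
  assumes "simple_graph V E"
    and "\<forall>(VH :: 'a set) EH. topological_minor VH EH V E \<and> VH \<noteq> {}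
           \<longrightarrow> (\<exists>v\<in>VH. degree EH v \<le> k)"
  shows "dynamically_colorable V E (k + 3)"
  using main[OF assms(2) tm_self[OF assms(1)]] .

end
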